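(* Let $m,k\in\mathbb{N}$ and let $\alpha\in\mathbb{C}$ with $\alpha,1-\alpha\notin\mathbb{Z}_0^-$. Then \[ {}_3F_2\left[\begin{array}{r} -m,\ \alpha,\ 1-\alpha;\\ -2m-k,\ 1+k;\end{array}1\right]_m=\frac{\left(\frac{2-\alpha+k}{2}\right)_{m} \left(\frac{1+\alpha+k}{2}\right)_{m}}{\left(\frac{2+k}{2}\right)_{m} \left(\frac{1+k}{2}\right)_{m}}. \]
   Context: $\mathbb{N}=\{1,2,3,\dots\}$, $\mathbb{Z}_0^-=\{0,-1,-2,\dots\}$. For $a\in\mathbb{C}$ and $n\in\mathbb{N}_0$, $(a)_0=1$ and $(a)_n=a(a+1)\cdots(a+n-1)$. For $N\in\mathbb{N}_0$, ${}_3F_2\left[\begin{array}{r} a_1,a_2,a_3;\\ b_1,b_2;\end{array}z\right]_N=\sum_{n=0}^{N}\frac{(a_1)_n(a_2)_n(a_3)_n}{(b_1)_n(b_2)_n}\frac{z^n}{n!}$ (the sum of the first $N+1$ terms), defined whenever $(b_1)_n(b_2)_n\neq0$ for $0\le n\le N$. *)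

theory Defs
  imports Complex_Main
begin

definition hyp3F2_trunc ::
  "complex \<Rightarrow> complex \<Rightarrow> complex \<Rightarrow> complex \<Rightarrow> complex \<Rightarrow> complex \<Rightarrow> nat \<Rightarrow> complex" where
  "hyp3F2_trunc a1 a2 a3 b1 b2 z N =
     (\<Sum>n=0..N. pochhammer a1 n * pochhammer a2 n * pochhammer a3 n
        / (pochhammer b1 n * pochhammer b2 n) * z ^ n / of_nat (fact n))"

end

theory Submission
  imports Defs
begin

definition tt :: "nat \<Rightarrow> complex \<Rightarrow> nat \<Rightarrow> nat \<Rightarrow> complex" where
  "tt k a m n = pochhammer (- of_nat m) n * pochhammer a n * pochhammer (1 - a) n
        / (pochhammer (- of_nat (2*m + k)) n * pochhammer (1 + of_nat k) n) * 1 ^ n / of_nat (fact n)"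

lemma poch_k_nz: "pochhammer (1 + of_nat k :: complex) n \<noteq> 0"
proof
  assume "pochhammer (1 + of_nat k :: complex) n = 0"
  then obtain i where "(1 + of_nat k :: complex) = - of_nat i" by (auto simp: pochhammer_eq_0_iff)
  have "(of_nat (1 + k + i) :: complex) = (1 + of_nat k) + of_nat i" by simp
  also have "\<dots> = 0" using \<open>(1 + of_nat k :: complex) = - of_nat i\<close> by simp
  finally show False by (simp only: of_nat_eq_0_iff)
qed

lemma poch_neg_nz: "n \<le> N \<Longrightarrow> pochhammer (- of_nat N :: complex) n \<noteq> 0"
  by (simp add: pochhammer_of_nat_eq_0_iff)

lemma nzd: "(i::nat) \<noteq> j \<Longrightarrow> (of_nat i - of_nat j :: complex) \<noteq> 0" by simp

lemma step1:
  assumes "j \<le> m" "k \<ge> 1"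
  shows "tt k a m (Suc j) = tt k a m j * ((of_nat j - of_nat m) * (a + of_nat j) * (1 - a + of_nat j)
     / ((of_nat j - of_nat (2*m+k)) * (1 + of_nat k + of_nat j) * (of_nat j + 1)))"
proof -
  have d: "pochhammer (- of_nat (2*m + k) :: complex) j \<noteq> 0" using assms by (intro poch_neg_nz) auto
  have e: "(of_nat j - of_nat (2*m+k) :: complex) \<noteq> 0" using assms by (intro nzd) auto
  have f: "(1 + of_nat k + of_nat j :: complex) \<noteq> 0" by (metis add.commute of_nat_Suc of_nat_add of_nat_eq_0_iff nat.distinct(1) add_Suc)
  have g: "(of_nat j + 1 :: complex) \<noteq> 0" by (metis of_nat_Suc of_nat_eq_0_iff nat.distinct(1) add.commute)
  show ?thesis using d e f g poch_k_nz[of k j]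
    unfolding tt_def pochhammer_Suc fact_Suc of_nat_mult
    by (simp add: field_simps)
qed

lemma step2:
  assumes "j \<le> m" "k \<ge> 1"
  shows "tt k a (Suc m) (Suc j) = tt k a m j * ((- of_nat m - 1) * (a + of_nat j) * (1 - a + of_nat j)
     * (of_nat j - of_nat (2*m+k) - 1)
     / ((- of_nat (2*m+k) - 2) * (- of_nat (2*m+k) - 1) * (1 + of_nat k + of_nat j) * (of_nat j + 1)))"
proof -
  define W where "W = pochhammer (- of_nat (2*m+k) - 1 :: complex) j"
  define D where "D = pochhammer (- of_nat (2*m+k) :: complex) j"
  have d: "D \<noteq> 0" unfolding D_def using assms by (intro poch_neg_nz) auto
  have e: "(of_nat j - of_nat (2*m+k) - 1 :: complex) \<noteq> 0"
    using nzd[of j "2*m+k+1"] assms by (simp add: algebra_simps)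
  have e2: "(- of_nat (2*m+k) - 1 :: complex) \<noteq> 0"
    by (metis add_uminus_conv_diff minus_add_distrib neg_equal_0_iff_equal of_nat_Suc of_nat_eq_0_iff nat.distinct(1) add.commute)
  have e3: "(- of_nat (2*m+k) - 2 :: complex) \<noteq> 0"
    using nzd[of 0 "2*m+k+2"] by (simp add: algebra_simps)
  have f: "(1 + of_nat k + of_nat j :: complex) \<noteq> 0" by (metis add.commute of_nat_Suc of_nat_add of_nat_eq_0_iff nat.distinct(1) add_Suc)
  have g: "(of_nat j + 1 :: complex) \<noteq> 0" by (metis of_nat_Suc of_nat_eq_0_iff nat.distinct(1) add.commute)
  have WD: "W * (of_nat j - of_nat (2*m+k) - 1) = (- of_nat (2*m+k) - 1) * D"
  proof -
    have "pochhammer (- of_nat (2*m+k) - 1 :: complex) (Suc j) = W * (of_nat j - of_nat (2*m+k) - 1)"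
      unfolding W_def pochhammer_Suc by (simp add: algebra_simps)
    moreover have "pochhammer (- of_nat (2*m+k) - 1 :: complex) (Suc j) = (- of_nat (2*m+k) - 1) * D"
      unfolding D_def pochhammer_rec by (simp add: algebra_simps)
    ultimately show ?thesis by simp
  qed
  have W': "W = (- of_nat (2*m+k) - 1) * D / (of_nat j - of_nat (2*m+k) - 1)"
    using WD e by (simp add: field_simps)
  have P: "pochhammer (- of_nat (Suc m) :: complex) (Suc j) = (- of_nat m - 1) * pochhammer (- of_nat m) j"
    unfolding pochhammer_rec by (simp add: algebra_simps)
  have E: "pochhammer (- of_nat (2 * Suc m + k) :: complex) (Suc j) = (- of_nat (2*m+k) - 2) * W"
  proof -
    have x: "(- of_nat (2 * Suc m + k) + 1 :: complex) = - of_nat (2*m+k) - 1" by simp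
    show ?thesis unfolding pochhammer_rec W_def x by (simp add: algebra_simps)
  qed
  show ?thesis using d e e2 e3 f g poch_k_nz[of k j]
    unfolding tt_def P E W' D_def[symmetric] unfolding pochhammer_Suc fact_Suc of_nat_mult
    by (simp add: field_simps)
qed

lemma abs_id:
  fixes A b P q T n1 n2 D1 D2 F E :: complex
  assumes "F \<noteq> 0" "E \<noteq> 0" "A \<noteq> 0" "D2 = A * E" "D1 = F * E"
    "n2 * F - b * n1 = P * n1 + q * F * E"
  shows "A * (T * (n2 / D2)) - b * (T * (n1 / D1)) = P * (T * (n1 / D1)) + q * T"
proof -
  have "A * (T * (n2 / D2)) - b * (T * (n1 / D1)) = T * (n2 * F - b * n1) / (F * E)"
    using assms(1-5) by (simp add: field_simps)
  also have "\<dots> = T * (P * n1 + q * F * E) / (F * E)" using assms(6) by simp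
  also have "\<dots> = P * (T * (n1 / D1)) + q * T"
    using assms(1-5) by (simp add: field_simps)
  finally show ?thesis .
qed

lemma local_id:
  assumes "j \<le> m" "k \<ge> 1"
  shows "(of_nat (2*m+k) + 2) * (of_nat (2*m+k) + 1) * tt k a (Suc m) (Suc j)
     - (of_nat (2*m+k) + 2 - a) * (of_nat (2*m+k) + 1 + a) * tt k a m (Suc j)
     = - (of_nat j + 1 + a) * (of_nat j + 2 - a) * tt k a m (Suc j) + (of_nat j + a) * (of_nat j + 1 - a) * tt k a m j"
  unfolding step1[OF assms] step2[OF assms]
proof (rule abs_id[where F = "of_nat j - of_nat (2*m+k)" and E = "(1 + of_nat k + of_nat j) * (of_nat j + 1)"])
  show "(of_nat j - of_nat (2*m+k) :: complex) \<noteq> 0"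
    using nzd[of j "2*m+k"] assms by (simp add: algebra_simps)
  have f: "(1 + of_nat k + of_nat j :: complex) \<noteq> 0" by (metis add.commute of_nat_Suc of_nat_add of_nat_eq_0_iff nat.distinct(1) add_Suc)
  have g: "(of_nat j + 1 :: complex) \<noteq> 0" by (metis of_nat_Suc of_nat_eq_0_iff nat.distinct(1) add.commute)
  show "(1 + of_nat k + of_nat j) * (of_nat j + 1 :: complex) \<noteq> 0" using f g by simp
  have "(of_nat (2*m+k) + 2 :: complex) = of_nat (2*m+k+2)" by simp
  moreover have "(of_nat (2*m+k) + 1 :: complex) = of_nat (2*m+k+1)" by simp
  ultimately show "(of_nat (2*m+k) + 2) * (of_nat (2*m+k) + 1 :: complex) \<noteq> 0"
    by (simp only: of_nat_eq_0_iff mult_eq_0_iff) simp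
qed (simp_all add: algebra_simps)


lemma tt0: "tt k a m 0 = 1" unfolding tt_def by simp

lemma tt_last: "tt k a m (Suc m) = 0"
  unfolding tt_def by (simp add: pochhammer_of_nat_eq_0_iff)

lemma tele:
  assumes "k \<ge> 1" "N \<le> m + 2"
  shows "(\<Sum>n<N. (of_nat (2*m+k) + 2) * (of_nat (2*m+k) + 1) * tt k a (Suc m) n
     - (of_nat (2*m+k) + 2 - a) * (of_nat (2*m+k) + 1 + a) * tt k a m n)
   = (case N of 0 \<Rightarrow> 0 | Suc j \<Rightarrow> - (of_nat j + a) * (of_nat j + 1 - a) * tt k a m j)"
  using assms(2)
proof (induction N)
  case 0
  then show ?case by simp
next
  case (Suc N)
  then have IH: "(\<Sum>n<N. (of_nat (2*m+k) + 2) * (of_nat (2*m+k) + 1) * tt k a (Suc m) n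
     - (of_nat (2*m+k) + 2 - a) * (of_nat (2*m+k) + 1 + a) * tt k a m n)
   = (case N of 0 \<Rightarrow> 0 | Suc j \<Rightarrow> - (of_nat j + a) * (of_nat j + 1 - a) * tt k a m j)" by simp
  show ?case
  proof (cases N)
    case 0
    then show ?thesis by (simp add: tt0 algebra_simps)
  next
    case (Suc j)
    have "j \<le> m" using Suc \<open>Suc N \<le> m + 2\<close> by simp
    from local_id[OF this assms(1), of a] show ?thesis unfolding sum.lessThan_Suc IH using Suc
      by (simp add: algebra_simps)
  qed
qed

lemma rec_S:
  assumes "k \<ge> 1"
  shows "(of_nat (2*m+k) + 2) * (of_nat (2*m+k) + 1) * (\<Sum>n<Suc (Suc m). tt k a (Suc m) n)
     = (of_nat (2*m+k) + 2 - a) * (of_nat (2*m+k) + 1 + a) * (\<Sum>n<Suc m. tt k a m n)"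
proof -
  have "(\<Sum>n<Suc (Suc m). (of_nat (2*m+k) + 2) * (of_nat (2*m+k) + 1) * tt k a (Suc m) n
     - (of_nat (2*m+k) + 2 - a) * (of_nat (2*m+k) + 1 + a) * tt k a m n) = 0"
    using tele[OF assms, of "Suc (Suc m)" m a] by (simp add: tt_last)
  then show ?thesis
    unfolding sum_subtractf sum_distrib_left[symmetric]
    by (simp add: tt_last)
qed

lemma half_nz: "pochhammer ((of_nat c + 1) / 2 :: complex) n \<noteq> 0"
proof
  assume "pochhammer ((of_nat c + 1) / 2 :: complex) n = 0"
  then obtain i where "((of_nat c + 1) / 2 :: complex) = - of_nat i" by (auto simp: pochhammer_eq_0_iff)
  then have "(of_nat c + 1 :: complex) + 2 * of_nat i = 0" by (simp add: field_simps)
  then have "(of_nat (c + 1 + 2 * i) :: complex) = 0" by (simp add: algebra_simps)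
  then show False by (simp only: of_nat_eq_0_iff)
qed

lemma gen:
  fixes P1 P2 P3 P4 c1 c2 c3 c4 X Y Z :: complex
  assumes "P3 \<noteq> 0" "P4 \<noteq> 0" "c3 \<noteq> 0" "c4 \<noteq> 0" "Z \<noteq> 0"
    "X * Y * (c3 * c4) = c1 * c2 * Z"
  shows "X * Y * (P1 * P2 / (P3 * P4)) / Z = P1 * c1 * (P2 * c2) / (P3 * c3 * (P4 * c4))"
proof -
  have h: "X * Y / Z = c1 * c2 / (c3 * c4)" using assms by (simp add: field_simps)
  have "X * Y * (P1 * P2 / (P3 * P4)) / Z = (X * Y / Z) * (P1 * P2 / (P3 * P4))" by simp
  also have "\<dots> = c1 * c2 / (c3 * c4) * (P1 * P2 / (P3 * P4))" by (simp only: h)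
  also have "\<dots> = P1 * c1 * (P2 * c2) / (P3 * c3 * (P4 * c4))" by (simp add: ac_simps)
  finally show ?thesis .
qed

theorem mainTheorem5:
  fixes m k :: nat and \<alpha> :: complex
  assumes "m \<ge> 1" and "k \<ge> 1"
    and "\<forall>j::nat. \<alpha> \<noteq> - of_nat j"
    and "\<forall>j::nat. 1 - \<alpha> \<noteq> - of_nat j"
  shows "hyp3F2_trunc (- of_nat m) \<alpha> (1 - \<alpha>) (- of_nat (2*m + k)) (1 + of_nat k) 1 m =
    pochhammer ((2 - \<alpha> + of_nat k) / 2) m * pochhammer ((1 + \<alpha> + of_nat k) / 2) m
    / (pochhammer ((2 + of_nat k) / 2) m * pochhammer ((1 + of_nat k) / 2) m)"
proof -
  have e1: "(2 + of_nat k) / 2 = ((of_nat (k+1) + 1) / 2 :: complex)" by simp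
  have e2: "(1 + of_nat k) / 2 = ((of_nat k + 1) / 2 :: complex)" by simp
  have "(\<Sum>n<Suc m. tt k \<alpha> m n) =
    pochhammer ((2 - \<alpha> + of_nat k) / 2) m * pochhammer ((1 + \<alpha> + of_nat k) / 2) m
    / (pochhammer ((2 + of_nat k) / 2) m * pochhammer ((1 + of_nat k) / 2) m)"
  proof (induction m)
    case 0
    then show ?case by (simp add: tt0)
  next
    case (Suc m)
    have A: "(of_nat (2*m+k) + 2) * (of_nat (2*m+k) + 1 :: complex) \<noteq> 0"
    proof -
      have "(of_nat (2*m+k) + 2 :: complex) = of_nat (2*m+k+2)" by simp
      moreover have "(of_nat (2*m+k) + 1 :: complex) = of_nat (2*m+k+1)" by simp
      ultimately show ?thesis by (simp only: of_nat_eq_0_iff mult_eq_0_iff) simp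
    qed
    have d1: "pochhammer ((2 + of_nat k) / 2 :: complex) m \<noteq> 0" unfolding e1 by (rule half_nz)
    have d2: "pochhammer ((1 + of_nat k) / 2 :: complex) m \<noteq> 0" unfolding e2 by (rule half_nz)
    have d3: "((2 + of_nat k) / 2 + of_nat m :: complex) \<noteq> 0"
      using half_nz[of "k+1" "Suc m"] unfolding pochhammer_Suc e1[symmetric] by simp
    have d4: "((1 + of_nat k) / 2 + of_nat m :: complex) \<noteq> 0"
      using half_nz[of "k" "Suc m"] unfolding pochhammer_Suc e2[symmetric] by simp
    have "(\<Sum>n<Suc (Suc m). tt k \<alpha> (Suc m) n) =
       (of_nat (2*m+k) + 2 - \<alpha>) * (of_nat (2*m+k) + 1 + \<alpha>) * (\<Sum>n<Suc m. tt k \<alpha> m n)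
       / ((of_nat (2*m+k) + 2) * (of_nat (2*m+k) + 1))"
      using rec_S[OF assms(2), of m \<alpha>] A by (simp add: field_simps)
    also have "\<dots> = (of_nat (2*m+k) + 2 - \<alpha>) * (of_nat (2*m+k) + 1 + \<alpha>) *
       (pochhammer ((2 - \<alpha> + of_nat k) / 2) m * pochhammer ((1 + \<alpha> + of_nat k) / 2) m
        / (pochhammer ((2 + of_nat k) / 2) m * pochhammer ((1 + of_nat k) / 2) m))
       / ((of_nat (2*m+k) + 2) * (of_nat (2*m+k) + 1))" unfolding Suc.IH ..
    also have "\<dots> = pochhammer ((2 - \<alpha> + of_nat k) / 2) (Suc m) * pochhammer ((1 + \<alpha> + of_nat k) / 2) (Suc m)
    / (pochhammer ((2 + of_nat k) / 2) (Suc m) * pochhammer ((1 + of_nat k) / 2) (Suc m))"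
      unfolding pochhammer_Suc
    proof (rule gen[OF d1 d2 d3 d4 A])
      show "(of_nat (2*m+k) + 2 - \<alpha>) * (of_nat (2*m+k) + 1 + \<alpha>) *
        (((2 + of_nat k) / 2 + of_nat m) * ((1 + of_nat k) / 2 + of_nat m)) =
        ((2 - \<alpha> + of_nat k) / 2 + of_nat m) * ((1 + \<alpha> + of_nat k) / 2 + of_nat m) *
        ((of_nat (2*m+k) + 2) * (of_nat (2*m+k) + 1))"
        by (simp add: field_simps)
    qed
    finally show ?case .
  qed
  moreover have "hyp3F2_trunc (- of_nat m) \<alpha> (1 - \<alpha>) (- of_nat (2*m + k)) (1 + of_nat k) 1 m
     = (\<Sum>n<Suc m. tt k \<alpha> m n)"
    unfolding hyp3F2_trunc_def tt_def atLeast0AtMost lessThan_Suc_atMost ..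
  ultimately show ?thesis by simp
qed

end
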